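(* For every field $\mathbb{F}$, $n,d,e\ge1$ and tensors $A:[n]^{2d}\to\mathbb{F}$, $B:[n]^{2e}\to\mathbb{F}$, we have $\rho(A\otimes B)\le n^{-1}\min\{\rho(A),\rho(B)\}$, where $A\otimes B:[n]^{2(d+e)}\to\mathbb{F}$, $(A\otimes B)(x,y)=A(x)B(y)$.
   Context: For a tensor $C:[n]^{2m}\to\mathbb{F}$, $a,b\in\{0,1\}$, $\alpha\in\{0,1\}^{m-1}$: $I_{a,\alpha,b}=[2m]\cap\{a,2+\alpha_1,4+\alpha_2,\dots,2m-2+\alpha_{m-1},2m+b\}$, $J_{a,\alpha,b}=[2m]\cap\{1-a,3-\alpha_1,\dots,2m-1-\alpha_{m-1},2m+1-b\}$ (a partition of $[2m]$); $\mathrm{Mat}_{I,J}(C)$ is the flattening with rows indexed by coordinates in $I$ and columns by those in $J$; $\mathrm{relrk}_{a,\alpha,b}(C)=n^{-m}\mathrm{rank}\,\mathrm{Mat}_{I_{a,\alpha,b},J_{a,\alpha,b}}(C)$; and $\rho(C)=\max_{a,b\in\{0,1\}}\min\sum_{\alpha\in\{0,1\}^{m-1}}\mathrm{relrk}_{a,\alpha,b}(X_\alpha)$, the minimum over families $X_\alpha:[n]^{2m}\to\mathbb{F}$ with $C=\sum_\alpha X_\alpha$. *)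

theory Defs
  imports Complex_Main "HOL-Library.Function_Algebras"
begin

text \<open>A tensor [n]^{2m} -> F is a function (nat => nat) => F, of which only the values on
  asg n {1..2m} matter (coordinates are numbered 1..2m).\<close>
definition asg :: "nat \<Rightarrow> nat set \<Rightarrow> (nat \<Rightarrow> nat) set" where
  "asg n S = {x. (\<forall>i\<in>S. x i < n) \<and> (\<forall>i. i \<notin> S \<longrightarrow> x i = 0)}"

definition merge :: "nat set \<Rightarrow> (nat \<Rightarrow> nat) \<Rightarrow> (nat \<Rightarrow> nat) \<Rightarrow> (nat \<Rightarrow> nat)" where
  "merge I r c = (\<lambda>i. if i \<in> I then r i else c i)"

definition mrank :: "('r \<Rightarrow> 'c \<Rightarrow> 'a::field) \<Rightarrow> 'r set \<Rightarrow> 'c set \<Rightarrow> nat" where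
  "mrank M Rs Cs = vector_space.dim (\<lambda>(s::'a) f x. s * f x)
      ((\<lambda>r. \<lambda>c. if c \<in> Cs then M r c else 0) ` Rs)"

definition alphas :: "nat \<Rightarrow> (nat \<Rightarrow> nat) set" where
  "alphas m = {\<alpha>. (\<forall>k\<in>{1..m-1}. \<alpha> k \<in> {0,1}) \<and> (\<forall>k. k \<notin> {1..m-1} \<longrightarrow> \<alpha> k = 0)}"

definition Iset :: "nat \<Rightarrow> nat \<Rightarrow> (nat \<Rightarrow> nat) \<Rightarrow> nat \<Rightarrow> nat set" where
  "Iset m a \<alpha> b = {1..2*m} \<inter> ({a, 2*m + b} \<union> {2*k + \<alpha> k | k. k \<in> {1..m-1}})"

definition Jset :: "nat \<Rightarrow> nat \<Rightarrow> (nat \<Rightarrow> nat) \<Rightarrow> nat \<Rightarrow> nat set" where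
  "Jset m a \<alpha> b = {1..2*m} \<inter> ({1 - a, 2*m + 1 - b} \<union> {2*k + 1 - \<alpha> k | k. k \<in> {1..m-1}})"

definition relrk :: "nat \<Rightarrow> nat \<Rightarrow> nat \<Rightarrow> (nat \<Rightarrow> nat) \<Rightarrow> nat \<Rightarrow> ((nat \<Rightarrow> nat) \<Rightarrow> 'a::field) \<Rightarrow> real" where
  "relrk n m a \<alpha> b C =
     real (mrank (\<lambda>r c. C (merge (Iset m a \<alpha> b) r c)) (asg n (Iset m a \<alpha> b)) (asg n (Jset m a \<alpha> b)))
     / real n ^ m"

definition rho :: "nat \<Rightarrow> nat \<Rightarrow> ((nat \<Rightarrow> nat) \<Rightarrow> 'a::field) \<Rightarrow> real" where
  "rho n m C = (MAX a\<in>{0,1::nat}. MAX b\<in>{0,1::nat}.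
      Inf {\<Sum>\<alpha>\<in>alphas m. relrk n m a \<alpha> b (X \<alpha>) | X.
             \<forall>x\<in>asg n {1..2*m}. C x = (\<Sum>\<alpha>\<in>alphas m. X \<alpha> x)})"

definition tprod :: "nat \<Rightarrow> nat \<Rightarrow> ((nat \<Rightarrow> nat) \<Rightarrow> 'a::field) \<Rightarrow> ((nat \<Rightarrow> nat) \<Rightarrow> 'a) \<Rightarrow> ((nat \<Rightarrow> nat) \<Rightarrow> 'a)" where
  "tprod d e A B = (\<lambda>z. A (\<lambda>i. if i \<in> {1..2*d} then z i else 0)
                      * B (\<lambda>i. if i \<in> {1..2*e} then z (2*d + i) else 0))"

end

theory Submission
  imports Defs "HOL-Library.FuncSet"
begin


lemma sum_fun_apply: "(\<Sum>j\<in>F. f j) x = (\<Sum>j\<in>F. f j x)"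
  by (induction F rule: infinite_finite_induct) auto

lemma vs_fun: "vector_space (\<lambda>(s::'a::field) (f::'c\<Rightarrow>'a) x. s * f x)"
  by unfold_locales (auto simp: algebra_simps fun_eq_iff)

lemma mrank_prod_bound:
  fixes P :: "'r2 \<Rightarrow> 'c2 \<Rightarrow> 'a::field" and M :: "'r \<Rightarrow> 'c \<Rightarrow> 'a"
  assumes fin: "finite RP" "finite F" and phi: "\<phi> ` Rs \<subseteq> RP" and psi: "\<psi> ` Cs \<subseteq> CP"
    and M: "\<And>r c. r \<in> Rs \<Longrightarrow> c \<in> Cs \<Longrightarrow> M r c = (\<Sum>j\<in>F. h r j * k j c) * P (\<phi> r) (\<psi> c)"
  shows "mrank M Rs Cs \<le> card F * mrank P RP CP"
proof -
  interpret V: vector_space "\<lambda>(s::'a) (f::'c2\<Rightarrow>'a) x. s * f x" by (rule vs_fun)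
  interpret W: vector_space "\<lambda>(s::'a) (f::'c\<Rightarrow>'a) x. s * f x" by (rule vs_fun)
  define p where "p = (\<lambda>r c. if c \<in> CP then P r c else 0)"
  define VP where "VP = p ` RP"
  obtain Bas where Bas: "Bas \<subseteq> VP" "VP \<subseteq> V.span Bas" "card Bas = V.dim VP"
    by (rule V.basis_exists)
  have finB: "finite Bas" using Bas(1) fin(1) unfolding VP_def by (meson finite_imageI finite_subset)
  define T where "T j u = (\<lambda>c. if c \<in> Cs then k j c * u (\<psi> c) else 0)" for j u
  define Wset where "Wset = (\<Union>j\<in>F. T j ` Bas)"
  have hom: "module_hom (\<lambda>(s::'a) (f::'c2\<Rightarrow>'a) x. s * f x) (\<lambda>(s::'a) (f::'c\<Rightarrow>'a) x. s * f x) (T j)" for j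
    by (auto simp: module_hom_def module_hom_axioms_def T_def fun_eq_iff algebra_simps
        V.module_axioms W.module_axioms)
  have rows: "(\<lambda>r. \<lambda>c. if c \<in> Cs then M r c else 0) ` Rs \<subseteq> W.span Wset"
  proof
    fix v assume "v \<in> (\<lambda>r. \<lambda>c. if c \<in> Cs then M r c else 0) ` Rs"
    then obtain r where r: "r \<in> Rs" and v: "v = (\<lambda>c. if c \<in> Cs then M r c else 0)" by blast
    have veq: "v = (\<Sum>j\<in>F. (\<lambda>x. h r j * T j (p (\<phi> r)) x))"
    proof
      fix c
      show "v c = (\<Sum>j\<in>F. (\<lambda>x. h r j * T j (p (\<phi> r)) x)) c"
        using psi r unfolding sum_fun_apply v T_def p_def
        by (auto simp: M sum_distrib_right mult.assoc)
    qed
    have "T j (p (\<phi> r)) \<in> W.span Wset" if j: "j \<in> F" for j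
    proof -
      have "p (\<phi> r) \<in> V.span Bas" using Bas(2) phi r unfolding VP_def by auto
      then have "T j (p (\<phi> r)) \<in> W.span (T j ` Bas)"
        using module_hom.span_image[OF hom[of j], of Bas] by auto
      moreover have "W.span (T j ` Bas) \<subseteq> W.span Wset"
        by (rule W.span_mono) (use j in \<open>auto simp: Wset_def\<close>)
      ultimately show ?thesis by auto
    qed
    then show "v \<in> W.span Wset" unfolding veq
      by (intro W.span_sum W.span_scale) auto
  qed
  have "mrank M Rs Cs \<le> card Wset"
    unfolding mrank_def using W.dim_le_card[OF rows] finB fin(2) Wset_def by auto
  also have "card Wset \<le> (\<Sum>j\<in>F. card (T j ` Bas))"
    unfolding Wset_def by (rule card_UN_le[OF fin(2)])
  also have "\<dots> \<le> (\<Sum>j\<in>F. card Bas)"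
    by (intro sum_mono card_image_le finB)
  also have "\<dots> = card F * mrank P RP CP"
    using Bas(3) by (simp add: mrank_def VP_def p_def)
  finally show ?thesis .
qed


lemma asg_fin_card:
  assumes "finite S"
  shows "finite (asg n S) \<and> card (asg n S) \<le> n ^ card S"
proof -
  have inj: "inj_on (\<lambda>x. restrict x S) (asg n S)"
  proof (rule inj_onI)
    fix x y assume x: "x \<in> asg n S" and y: "y \<in> asg n S" and eq: "restrict x S = restrict y S"
    show "x = y"
    proof
      fix i show "x i = y i"
      proof (cases "i \<in> S")
        case True then show ?thesis using fun_cong[OF eq, of i] by simp
      next
        case False then show ?thesis using x y by (simp add: asg_def)
      qed
    qed
  qed
  have sub: "(\<lambda>x. restrict x S) ` asg n S \<subseteq> PiE S (\<lambda>_. {..<n})"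
    by (auto simp: asg_def)
  have finP: "finite (PiE S (\<lambda>_. {..<n}))" using assms by (simp add: finite_PiE)
  have cP: "card (PiE S (\<lambda>_. {..<n})) = n ^ card S" using assms by (simp add: card_PiE)
  have "finite (asg n S)"
    using inj sub finP finite_imageD finite_subset by blast
  moreover have "card (asg n S) \<le> n ^ card S"
    using card_inj_on_le[OF inj sub finP] cP by simp
  ultimately show ?thesis by blast
qed

lemma delta1: "finite A \<Longrightarrow> a \<in> A \<Longrightarrow> (\<Sum>j\<in>A. (if a = j then 1 else 0) * (G j::'a::field)) = G a"
proof -
  assume "finite A" "a \<in> A"
  have "(\<Sum>j\<in>A. (if a = j then 1 else 0) * G j) = (\<Sum>j\<in>A. if a = j then G j else 0)"
    by (rule sum.cong) auto
  then show ?thesis using \<open>finite A\<close> \<open>a \<in> A\<close> by simp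
qed

lemma delta2: "finite A \<Longrightarrow> a \<in> A \<Longrightarrow> (\<Sum>j\<in>A. (G j::'a::field) * (if a = j then 1 else 0)) = G a"
  using delta1[of A a G] by (simp add: mult.commute)

lemma factor_split:
  fixes G :: "(nat \<Rightarrow> nat) \<Rightarrow> (nat \<Rightarrow> nat) \<Rightarrow> 'a::field"
  assumes "n \<ge> 1" "finite S" "finite T" "f ` R \<subseteq> asg n S" "g ` C \<subseteq> asg n T"
    "card S \<le> k \<or> card T \<le> k"
  shows "\<exists>(F::(nat\<Rightarrow>nat) set) h kk. finite F \<and> card F \<le> n ^ k \<and>
     (\<forall>r\<in>R. \<forall>c\<in>C. G (f r) (g c) = (\<Sum>j\<in>F. h r j * kk j c))"
  using assms(6)
proof
  assume cS: "card S \<le> k"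
  have "card (asg n S) \<le> n ^ k"
    using le_trans[OF conjunct2[OF asg_fin_card[OF assms(2), of n]] power_increasing[OF cS assms(1)]] .
  moreover have "\<forall>r\<in>R. \<forall>c\<in>C. G (f r) (g c) =
      (\<Sum>j\<in>asg n S. (if f r = j then 1 else 0) * G j (g c))" (is "\<forall>r\<in>R. \<forall>c\<in>C. ?eq r c")
  proof (intro ballI)
    fix r c assume rc: "r \<in> R" "c \<in> C"
    show "?eq r c"
    proof -
      have fr: "f r \<in> asg n S" using assms(4) rc by blast
      show ?thesis using delta1[where G="\<lambda>j. G j (g c)", OF conjunct1[OF asg_fin_card[OF assms(2), of n]] fr] by simp
    qed
  qed
  ultimately show ?thesis using asg_fin_card[OF assms(2), of n]
    by (intro exI[of _ "asg n S"] exI[of _ "\<lambda>r j. if f r = j then 1 else 0"] exI[of _ "\<lambda>j c. G j (g c)"] conjI) blast+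
next
  assume cT: "card T \<le> k"
  have "card (asg n T) \<le> n ^ k"
    using le_trans[OF conjunct2[OF asg_fin_card[OF assms(3), of n]] power_increasing[OF cT assms(1)]] .
  moreover have "\<forall>r\<in>R. \<forall>c\<in>C. G (f r) (g c) =
      (\<Sum>j\<in>asg n T. G (f r) j * (if g c = j then 1 else 0))" (is "\<forall>r\<in>R. \<forall>c\<in>C. ?eq r c")
  proof (intro ballI)
    fix r c assume rc: "r \<in> R" "c \<in> C"
    show "?eq r c"
    proof -
      have gc: "g c \<in> asg n T" using assms(5) rc by blast
      show ?thesis using delta2[where G="\<lambda>j. G (f r) j", OF conjunct1[OF asg_fin_card[OF assms(3), of n]] gc] by simp
    qed
  qed
  ultimately show ?thesis using asg_fin_card[OF assms(3), of n]
    by (intro exI[of _ "asg n T"] exI[of _ "\<lambda>r j. G (f r) j"] exI[of _ "\<lambda>j c. if g c = j then 1 else 0"] conjI) blast+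
qed

lemma core:
  fixes X G :: "(nat \<Rightarrow> nat) \<Rightarrow> 'a::field"
  assumes "n \<ge> 1" "finite I1" "finite I2" "finite J2" "card I2 \<le> k \<or> card J2 \<le> k"
    and p1m: "\<And>r c. p1 (merge I r c) = merge I1 (p1 r) (p1 c)"
    and p2m: "\<And>r c. p2 (merge I r c) = merge I2 (p2 r) (p2 c)"
    and "p1 ` asg n I \<subseteq> asg n I1" "p1 ` asg n J \<subseteq> asg n J1"
    and "p2 ` asg n I \<subseteq> asg n I2" "p2 ` asg n J \<subseteq> asg n J2"
  shows "mrank (\<lambda>r c. X (p1 (merge I r c)) * G (p2 (merge I r c))) (asg n I) (asg n J)
         \<le> n ^ k * mrank (\<lambda>r c. X (merge I1 r c)) (asg n I1) (asg n J1)"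
proof -
  have ex: "\<exists>(F::(nat\<Rightarrow>nat) set) h kk. finite F \<and> card F \<le> n ^ k \<and>
     (\<forall>r\<in>asg n I. \<forall>c\<in>asg n J. G (merge I2 (p2 r) (p2 c)) = (\<Sum>j\<in>F. h r j * kk j c))"
    by (rule factor_split[OF assms(1,3,4) assms(10,11) assms(5)])
  then obtain F :: "(nat\<Rightarrow>nat) set" and h kk where F: "finite F" "card F \<le> n ^ k"
    and eq: "\<forall>r\<in>asg n I. \<forall>c\<in>asg n J. G (merge I2 (p2 r) (p2 c)) = (\<Sum>j\<in>F. h r j * kk j c)"
    by (elim exE conjE) (rule that; assumption)
  have M: "X (p1 (merge I r c)) * G (p2 (merge I r c)) = (\<Sum>j\<in>F. h r j * kk j c) * X (merge I1 (p1 r) (p1 c))"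
    if "r \<in> asg n I" "c \<in> asg n J" for r c
  proof -
    have "G (p2 (merge I r c)) = (\<Sum>j\<in>F. h r j * kk j c)"
      unfolding p2m using eq that by blast
    then show ?thesis unfolding p1m by (simp only: mult.commute)
  qed
  have "mrank (\<lambda>r c. X (p1 (merge I r c)) * G (p2 (merge I r c))) (asg n I) (asg n J)
     \<le> card F * mrank (\<lambda>r c. X (merge I1 r c)) (asg n I1) (asg n J1)"
    by (rule mrank_prod_bound[where \<phi>=p1 and \<psi>=p1 and h=h and k=kk, OF
        conjunct1[OF asg_fin_card[OF assms(2), of n]] F(1) assms(8,9) M])
  also have "\<dots> \<le> n ^ k * mrank (\<lambda>r c. X (merge I1 r c)) (asg n I1) (asg n J1)"
    using F(2) by simp
  finally show ?thesis .
qed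

definition resA :: "nat \<Rightarrow> (nat \<Rightarrow> nat) \<Rightarrow> (nat \<Rightarrow> nat)" where
  "resA d z = (\<lambda>i. if i \<in> {1..2*d} then z i else 0)"
definition resB :: "nat \<Rightarrow> nat \<Rightarrow> (nat \<Rightarrow> nat) \<Rightarrow> (nat \<Rightarrow> nat)" where
  "resB d e z = (\<lambda>i. if i \<in> {1..2*e} then z (2*d + i) else 0)"

lemma tprod_res: "tprod d e A B z = A (resA d z) * B (resB d e z)"
  by (simp add: tprod_def resA_def resB_def)

lemma resA_merge: "resA d (merge I r c) = merge (I \<inter> {1..2*d}) (resA d r) (resA d c)"
  by (auto simp: resA_def merge_def fun_eq_iff)

lemma resA_asg: "x \<in> asg n I \<Longrightarrow> resA d x \<in> asg n (I \<inter> {1..2*d})"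
  by (auto simp: resA_def asg_def)

lemma resB_merge: "resB d e (merge I r c) = merge {i\<in>{1..2*e}. 2*d+i \<in> I} (resB d e r) (resB d e c)"
  by (auto simp: resB_def merge_def fun_eq_iff)

lemma resB_asg: "x \<in> asg n I \<Longrightarrow> resB d e x \<in> asg n {i\<in>{1..2*e}. 2*d+i \<in> I}"
  by (auto simp: resB_def asg_def)



lemma mem_Iset: "x \<in> Iset m a \<alpha> b \<longleftrightarrow> 1 \<le> x \<and> x \<le> 2*m \<and> (x = a \<or> x = 2*m+b \<or> (\<exists>k. 1\<le>k \<and> k \<le> m-1 \<and> x = 2*k + \<alpha> k))"
  unfolding Iset_def by auto

lemma mem_Jset: "x \<in> Jset m a \<alpha> b \<longleftrightarrow> 1 \<le> x \<and> x \<le> 2*m \<and> (x = 1 - a \<or> x = 2*m+1-b \<or> (\<exists>k. 1\<le>k \<and> k \<le> m-1 \<and> x = 2*k + 1 - \<alpha> k))"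
  unfolding Jset_def by auto

definition combA :: "nat \<Rightarrow> nat \<Rightarrow> (nat \<Rightarrow> nat) \<Rightarrow> (nat \<Rightarrow> nat)" where
  "combA d b \<alpha> = (\<lambda>k. if k < d then \<alpha> k else if k = d then 1 - b else 0)"

definition combB :: "nat \<Rightarrow> nat \<Rightarrow> (nat \<Rightarrow> nat) \<Rightarrow> (nat \<Rightarrow> nat)" where
  "combB d a \<alpha> = (\<lambda>k. if k < d then 0 else if k = d then 1 - a else \<alpha> (k - d))"

lemma alphas_le1: "\<alpha> \<in> alphas m \<Longrightarrow> \<alpha> k \<le> 1"
proof -
  assume a: "\<alpha> \<in> alphas m"
  show ?thesis
  proof (cases "k \<in> {1..m-1}")
    case True
    then have "\<alpha> k \<in> {0,1}" using a unfolding alphas_def by blast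
    then show ?thesis by auto
  next
    case False
    then have "\<alpha> k = 0" using a unfolding alphas_def by blast
    then show ?thesis by simp
  qed
qed

lemma combA_alphas:
  assumes "\<alpha> \<in> alphas d" "d \<ge> 1" "e \<ge> 1" "b \<le> 1"
  shows "combA d b \<alpha> \<in> alphas (d+e)"
  using assms unfolding alphas_def combA_def by auto

lemma combB_alphas:
  assumes "\<alpha> \<in> alphas e" "d \<ge> 1" "e \<ge> 1" "a \<le> 1"
  shows "combB d a \<alpha> \<in> alphas (d+e)"
proof -
  have z: "\<alpha> k = 0" if "k \<notin> {1..e-1}" for k using assms(1) that unfolding alphas_def by auto
  have o: "\<alpha> k \<in> {0,1}" if "k \<in> {1..e-1}" for k using assms(1) that unfolding alphas_def by auto
  have 1: "combB d a \<alpha> k \<in> {0,1}" for k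
  proof (cases "k < d")
    case True then show ?thesis by (simp add: combB_def)
  next
    case False
    show ?thesis
    proof (cases "k = d")
      case True then show ?thesis using assms(4) by (auto simp: combB_def)
    next
      case False2: False
      then have eq: "combB d a \<alpha> k = \<alpha> (k - d)" using False by (simp add: combB_def)
      show ?thesis
      proof (cases "k - d \<in> {1..e-1}")
        case True then show ?thesis using o eq by simp
      next
        case False then show ?thesis using z eq by simp
      qed
    qed
  qed
  have 2: "combB d a \<alpha> k = 0" if "k \<notin> {1..d+e-1}" for k
  proof (cases "k < d")
    case True then show ?thesis by (simp add: combB_def)
  next
    case False
    then have "k \<ge> d + e" "k \<noteq> d" using that assms(2,3) by auto
    then have "combB d a \<alpha> k = \<alpha> (k - d)" "k - d \<notin> {1..e-1}" using False by (auto simp: combB_def)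
    then show ?thesis using z by simp
  qed
  show ?thesis unfolding alphas_def using 1 2 by blast
qed


lemma Iset_cases:
  assumes "x \<in> Iset m a \<alpha> b"
  obtains "1\<le>x" "x\<le>2*m" "x = a" | "1\<le>x" "x\<le>2*m" "x = 2*m+b"
    | k where "1\<le>x" "x \<le> 2*m" "1\<le>k" "k\<le>m-1" "x = 2*k + \<alpha> k"
  using assms unfolding mem_Iset by blast

lemma Jset_cases:
  assumes "x \<in> Jset m a \<alpha> b"
  obtains "1\<le>x" "x\<le>2*m" "x = 1 - a" | "1\<le>x" "x\<le>2*m" "x = 2*m+1-b"
    | k where "1\<le>x" "x \<le> 2*m" "1\<le>k" "k\<le>m-1" "x = 2*k + 1 - \<alpha> k"
  using assms unfolding mem_Jset by blast

lemma SA1: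
  assumes "d\<ge>1" "e\<ge>1" "b\<le>1"
  shows "Iset (d+e) a (combA d b \<alpha>) b \<inter> {1..2*d} = Iset d a \<alpha> (1-b)"
proof (rule set_eqI, rule iffI)
  fix x assume "x \<in> Iset (d+e) a (combA d b \<alpha>) b \<inter> {1..2*d}"
  then have x: "x \<in> Iset (d+e) a (combA d b \<alpha>) b" "1\<le>x" "x\<le>2*d" by auto
  from x(1) show "x \<in> Iset d a \<alpha> (1-b)"
  proof (cases rule: Iset_cases)
    case 1 then show ?thesis using x by (simp add: mem_Iset)
  next
    case 2 then show ?thesis using x assms by simp
  next
    case (3 k)
    consider "k<d" | "k=d" | "k>d" by linarith
    then show ?thesis
    proof cases
      case 1
      have w: "1\<le>k \<and> k\<le>d-1 \<and> x = 2*k + \<alpha> k" using 1 3 by (simp add: combA_def)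
      show ?thesis unfolding mem_Iset using w x by blast
    next
      case 2 then show ?thesis using 3 x by (simp add: mem_Iset combA_def)
    next
      case 4: 3 then show ?thesis using 3 x by simp
    qed
  qed
next
  fix x assume x: "x \<in> Iset d a \<alpha> (1-b)"
  then have x12: "1\<le>x" "x\<le>2*d" unfolding mem_Iset by auto
  from x show "x \<in> Iset (d+e) a (combA d b \<alpha>) b \<inter> {1..2*d}"
  proof (cases rule: Iset_cases)
    case 1 then show ?thesis using x12 by (simp add: mem_Iset)
  next
    case 2
    have w: "1\<le>d \<and> d\<le>d+e-1 \<and> x = 2*d + combA d b \<alpha> d" using 2 assms by (simp add: combA_def)
    have "x \<le> 2*(d+e)" using x12 by simp
    then show ?thesis unfolding Int_iff atLeastAtMost_iff mem_Iset using w x12 by blast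
  next
    case (3 k)
    have w: "1\<le>k \<and> k\<le>d+e-1 \<and> x = 2*k + combA d b \<alpha> k" using 3 assms by (auto simp: combA_def)
    have "x \<le> 2*(d+e)" using x12 by simp
    then show ?thesis unfolding Int_iff atLeastAtMost_iff mem_Iset using w x12 by blast
  qed
qed

lemma SA2:
  assumes "d\<ge>1" "e\<ge>1" "b\<le>1"
  shows "Jset (d+e) a (combA d b \<alpha>) b \<inter> {1..2*d} = Jset d a \<alpha> (1-b)"
proof (rule set_eqI, rule iffI)
  fix x assume "x \<in> Jset (d+e) a (combA d b \<alpha>) b \<inter> {1..2*d}"
  then have x: "x \<in> Jset (d+e) a (combA d b \<alpha>) b" "1\<le>x" "x\<le>2*d" by auto
  from x(1) show "x \<in> Jset d a \<alpha> (1-b)"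
  proof (cases rule: Jset_cases)
    case 1 then show ?thesis using x by (simp add: mem_Jset)
  next
    case 2 then show ?thesis using x assms by simp
  next
    case (3 k)
    consider "k<d" | "k=d" | "k>d" by linarith
    then show ?thesis
    proof cases
      case 1
      have w: "1\<le>k \<and> k\<le>d-1 \<and> x = 2*k + 1 - \<alpha> k" using 1 3 by (simp add: combA_def)
      show ?thesis unfolding mem_Jset using w x by blast
    next
      case 2 then show ?thesis using 3 x assms by (simp add: mem_Jset combA_def)
    next
      case 4: 3 then show ?thesis using 3 x by (simp add: combA_def)
    qed
  qed
next
  fix x assume x: "x \<in> Jset d a \<alpha> (1-b)"
  then have x12: "1\<le>x" "x\<le>2*d" unfolding mem_Jset by auto
  from x show "x \<in> Jset (d+e) a (combA d b \<alpha>) b \<inter> {1..2*d}"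
  proof (cases rule: Jset_cases)
    case 1 then show ?thesis using x12 by (simp add: mem_Jset)
  next
    case 2
    have w: "1\<le>d \<and> d\<le>d+e-1 \<and> x = 2*d + 1 - combA d b \<alpha> d" using 2 assms by (simp add: combA_def)
    have "x \<le> 2*(d+e)" using x12 by simp
    then show ?thesis unfolding Int_iff atLeastAtMost_iff mem_Jset using w x12 by blast
  next
    case (3 k)
    have w: "1\<le>k \<and> k\<le>d+e-1 \<and> x = 2*k + 1 - combA d b \<alpha> k" using 3 assms by (auto simp: combA_def)
    have "x \<le> 2*(d+e)" using x12 by simp
    then show ?thesis unfolding Int_iff atLeastAtMost_iff mem_Jset using w x12 by blast
  qed
qed

lemma SA3:
  assumes "d\<ge>1" "e\<ge>1" "a\<le>1" "\<alpha> \<in> alphas d"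
  shows "{i\<in>{1..2*e}. 2*d+i \<in> Iset (d+e) a (combA d 1 \<alpha>) 1} \<subseteq> (\<lambda>j. 2*j) ` {1..e-1}"
proof
  fix i assume "i \<in> {i\<in>{1..2*e}. 2*d+i \<in> Iset (d+e) a (combA d 1 \<alpha>) 1}"
  then have i: "1 \<le> i" "i \<le> 2*e" "2*d+i \<in> Iset (d+e) a (combA d 1 \<alpha>) 1" by auto
  from i(3) show "i \<in> (\<lambda>j. 2*j) ` {1..e-1}"
  proof (cases rule: Iset_cases)
    case 1 then show ?thesis using i assms by simp
  next
    case 2 then show ?thesis using i by simp
  next
    case (3 k)
    consider "k<d" | "k=d" | "k>d" by linarith
    then show ?thesis
    proof cases
      case 1 then show ?thesis using 3 i alphas_le1[OF assms(4), of k] by (simp add: combA_def)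
    next
      case 2 then show ?thesis using 3 i by (simp add: combA_def)
    next
      case 4: 3
      then have "i = 2*(k-d)" "1 \<le> k-d" "k-d \<le> e-1" using 3 i by (auto simp: combA_def)
      then show ?thesis by auto
    qed
  qed
qed

lemma SA4:
  assumes "d\<ge>1" "e\<ge>1" "a\<le>1" "\<alpha> \<in> alphas d"
  shows "{i\<in>{1..2*e}. 2*d+i \<in> Jset (d+e) a (combA d 0 \<alpha>) 0} \<subseteq> (\<lambda>j. 2*j+1) ` {1..e-1}"
proof
  fix i assume "i \<in> {i\<in>{1..2*e}. 2*d+i \<in> Jset (d+e) a (combA d 0 \<alpha>) 0}"
  then have i: "1 \<le> i" "i \<le> 2*e" "2*d+i \<in> Jset (d+e) a (combA d 0 \<alpha>) 0" by auto
  from i(3) show "i \<in> (\<lambda>j. 2*j+1) ` {1..e-1}"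
  proof (cases rule: Jset_cases)
    case 1 then show ?thesis using i assms by simp
  next
    case 2 then show ?thesis using i by simp
  next
    case (3 k)
    consider "k<d" | "k=d" | "k>d" by linarith
    then show ?thesis
    proof cases
      case 1 then show ?thesis using 3 i by (simp add: combA_def)
    next
      case 2 then show ?thesis using 3 i by (simp add: combA_def)
    next
      case 4: 3
      then have "i = 2*(k-d)+1" "1 \<le> k-d" "k-d \<le> e-1" using 3 i by (auto simp: combA_def)
      then show ?thesis by auto
    qed
  qed
qed


lemma SB1:
  assumes "d\<ge>1" "e\<ge>1" "a\<le>1" "b \<le> 1" "\<alpha> \<in> alphas e"
  shows "{i\<in>{1..2*e}. 2*d+i \<in> Iset (d+e) a (combB d a \<alpha>) b} = Iset e (1-a) \<alpha> b"
proof (rule set_eqI, rule iffI)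
  fix i assume "i \<in> {i\<in>{1..2*e}. 2*d+i \<in> Iset (d+e) a (combB d a \<alpha>) b}"
  then have i: "1 \<le> i" "i \<le> 2*e" "2*d+i \<in> Iset (d+e) a (combB d a \<alpha>) b" by auto
  from i(3) show "i \<in> Iset e (1-a) \<alpha> b"
  proof (cases rule: Iset_cases)
    case 1 then show ?thesis using i assms by simp
  next
    case 2 then show ?thesis using i by (simp add: mem_Iset)
  next
    case (3 k)
    consider "k<d" | "k=d" | "k>d" by linarith
    then show ?thesis
    proof cases
      case 1 then show ?thesis using 3 i by (simp add: combB_def)
    next
      case 2 then show ?thesis using 3 i by (simp add: combB_def mem_Iset)
    next
      case 4: 3
      then have w: "1 \<le> k-d \<and> k-d \<le> e-1 \<and> i = 2*(k-d) + \<alpha> (k-d)" using 3 i by (auto simp: combB_def)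
      show ?thesis unfolding mem_Iset using w i by blast
    qed
  qed
next
  fix i assume i: "i \<in> Iset e (1-a) \<alpha> b"
  then have i12: "1\<le>i" "i\<le>2*e" unfolding mem_Iset by auto
  have le: "2*d+i \<le> 2*(d+e)" "1 \<le> 2*d+i" using i12 by simp_all
  from i show "i \<in> {i\<in>{1..2*e}. 2*d+i \<in> Iset (d+e) a (combB d a \<alpha>) b}"
  proof (cases rule: Iset_cases)
    case 1
    have w: "1\<le>d \<and> d\<le>d+e-1 \<and> 2*d+i = 2*d + combB d a \<alpha> d" using 1 assms by (auto simp: combB_def)
    show ?thesis unfolding mem_Collect_eq atLeastAtMost_iff mem_Iset using w i12 le by blast
  next
    case 2
    then show ?thesis using i12 by (simp add: mem_Iset)
  next
    case (3 j)
    have w: "1\<le>d+j \<and> d+j\<le>d+e-1 \<and> 2*d+i = 2*(d+j) + combB d a \<alpha> (d+j)" using 3 assms by (auto simp: combB_def)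
    show ?thesis unfolding mem_Collect_eq atLeastAtMost_iff mem_Iset using w i12 le by blast
  qed
qed

lemma SB2:
  assumes "d\<ge>1" "e\<ge>1" "a\<le>1" "b \<le> 1" "\<alpha> \<in> alphas e"
  shows "{i\<in>{1..2*e}. 2*d+i \<in> Jset (d+e) a (combB d a \<alpha>) b} = Jset e (1-a) \<alpha> b"
proof (rule set_eqI, rule iffI)
  fix i assume "i \<in> {i\<in>{1..2*e}. 2*d+i \<in> Jset (d+e) a (combB d a \<alpha>) b}"
  then have i: "1 \<le> i" "i \<le> 2*e" "2*d+i \<in> Jset (d+e) a (combB d a \<alpha>) b" by auto
  from i(3) show "i \<in> Jset e (1-a) \<alpha> b"
  proof (cases rule: Jset_cases)
    case 1 then show ?thesis using i assms by simp
  next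
    case 2
    then have "i = 2*e+1-b" using assms by arith
    then show ?thesis using i assms by (simp add: mem_Jset)
  next
    case (3 k)
    consider "k<d" | "k=d" | "k>d" by linarith
    then show ?thesis
    proof cases
      case 1 then show ?thesis using 3 i by (simp add: combB_def)
    next
      case 2 then show ?thesis using 3 i assms by (simp add: combB_def mem_Jset)
    next
      case 4: 3
      have al: "\<alpha> (k-d) \<le> 1" by (rule alphas_le1[OF assms(5)])
      have w: "1 \<le> k-d \<and> k-d \<le> e-1 \<and> i = 2*(k-d) + 1 - \<alpha> (k-d)" using 3 i 4 al by (auto simp: combB_def)
      show ?thesis unfolding mem_Jset using w i by blast
    qed
  qed
next
  fix i assume i: "i \<in> Jset e (1-a) \<alpha> b"
  then have i12: "1\<le>i" "i\<le>2*e" unfolding mem_Jset by auto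
  have le: "2*d+i \<le> 2*(d+e)" "1 \<le> 2*d+i" using i12 by simp_all
  from i show "i \<in> {i\<in>{1..2*e}. 2*d+i \<in> Jset (d+e) a (combB d a \<alpha>) b}"
  proof (cases rule: Jset_cases)
    case 1
    have w: "1\<le>d \<and> d\<le>d+e-1 \<and> 2*d+i = 2*d + 1 - combB d a \<alpha> d" using 1 assms i12 by (auto simp: combB_def)
    show ?thesis unfolding mem_Collect_eq atLeastAtMost_iff mem_Jset using w i12 le by blast
  next
    case 2
    then show ?thesis using i12 assms by (simp add: mem_Jset)
  next
    case (3 j)
    have al: "\<alpha> j \<le> 1" by (rule alphas_le1[OF assms(5)])
    have w: "1\<le>d+j \<and> d+j\<le>d+e-1 \<and> 2*d+i = 2*(d+j) + 1 - combB d a \<alpha> (d+j)" using 3 assms al by (auto simp: combB_def)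
    show ?thesis unfolding mem_Collect_eq atLeastAtMost_iff mem_Jset using w i12 le by blast
  qed
qed

lemma SB3:
  assumes "d\<ge>1" "e\<ge>1" "b \<le> 1"
  shows "Iset (d+e) 0 (combB d 0 \<alpha>) b \<inter> {1..2*d} \<subseteq> (\<lambda>j. 2*j) ` {1..d-1}"
proof
  fix x assume "x \<in> Iset (d+e) 0 (combB d 0 \<alpha>) b \<inter> {1..2*d}"
  then have x: "x \<in> Iset (d+e) 0 (combB d 0 \<alpha>) b" "1\<le>x" "x\<le>2*d" by auto
  from x(1) show "x \<in> (\<lambda>j. 2*j) ` {1..d-1}"
  proof (cases rule: Iset_cases)
    case 1 then show ?thesis using x by simp
  next
    case 2 then show ?thesis using x assms by simp
  next
    case (3 k)
    consider "k<d" | "k=d" | "k>d" by linarith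
    then show ?thesis
    proof cases
      case 1 then have "x = 2*k" "1 \<le> k" "k \<le> d-1" using 3 by (auto simp: combB_def)
      then show ?thesis by auto
    next
      case 2 then show ?thesis using 3 x by (simp add: combB_def)
    next
      case 4: 3 then show ?thesis using 3 x by simp
    qed
  qed
qed

lemma SB4:
  assumes "d\<ge>1" "e\<ge>1" "b \<le> 1" "\<alpha> \<in> alphas e"
  shows "Jset (d+e) 1 (combB d 1 \<alpha>) b \<inter> {1..2*d} \<subseteq> (\<lambda>j. 2*j+1) ` {1..d-1}"
proof
  fix x assume "x \<in> Jset (d+e) 1 (combB d 1 \<alpha>) b \<inter> {1..2*d}"
  then have x: "x \<in> Jset (d+e) 1 (combB d 1 \<alpha>) b" "1\<le>x" "x\<le>2*d" by auto
  from x(1) show "x \<in> (\<lambda>j. 2*j+1) ` {1..d-1}"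
  proof (cases rule: Jset_cases)
    case 1 then show ?thesis using x by simp
  next
    case 2 then show ?thesis using x assms by simp
  next
    case (3 k)
    consider "k<d" | "k=d" | "k>d" by linarith
    then show ?thesis
    proof cases
      case 1 then have "x = 2*k+1" "1 \<le> k" "k \<le> d-1" using 3 by (auto simp: combB_def)
      then show ?thesis by auto
    next
      case 2 then show ?thesis using 3 x by (simp add: combB_def)
    next
      case 4: 3
      have "combB d 1 \<alpha> k \<le> 1" using alphas_le1[OF combB_alphas[OF assms(4) assms(1,2)], of 1 k] by simp
      then show ?thesis using 3 x 4 by simp
    qed
  qed
qed



lemma alphas_asg: "alphas m = asg 2 {1..m-1}"
  unfolding alphas_def asg_def by (auto simp: less_2_cases_iff)

lemma finite_alphas: "finite (alphas m)"
  unfolding alphas_asg using asg_fin_card[of "{1..m-1}" 2] by simp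

lemma mrank_zero: "mrank (\<lambda>r c. (0::'a::field)) Rs Cs = 0"
proof -
  interpret W: vector_space "\<lambda>(s::'a) (f::'c\<Rightarrow>'a) x. s * f x" by (rule vs_fun)
  have "(\<lambda>r. \<lambda>c. if c \<in> Cs then (0::'a) else 0) ` Rs \<subseteq> W.span {}"
    using W.span_zero by (auto simp: zero_fun_def[symmetric])
  from W.dim_le_card[OF this] show ?thesis unfolding mrank_def by simp
qed

lemma relrk_zero: "relrk n m a \<alpha> b (\<lambda>_. (0::'a::field)) = 0"
  unfolding relrk_def using mrank_zero by (simp add: mrank_zero)

lemma relrk_nonneg: "relrk n m a \<alpha> b C \<ge> 0"
  unfolding relrk_def by simp

lemma build:
  fixes Z :: "(nat \<Rightarrow> nat) \<Rightarrow> (nat \<Rightarrow> nat) \<Rightarrow> 'a::field"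
  assumes inv: "\<And>\<beta>. \<beta> \<in> P \<Longrightarrow> proj (comb \<beta>) = \<beta>" and sub: "comb ` P \<subseteq> alphas m" and finP: "finite P"
    and bound: "\<And>\<beta>. \<beta> \<in> P \<Longrightarrow> relrk n m a (comb \<beta>) b (Z \<beta>) \<le> f \<beta>"
    and dec: "\<And>x. x \<in> asg n {1..2*m} \<Longrightarrow> C x = (\<Sum>\<beta>\<in>P. Z \<beta> x)"
  shows "\<exists>X. (\<forall>x\<in>asg n {1..2*m}. C x = (\<Sum>\<alpha>\<in>alphas m. X \<alpha> x)) \<and>
             (\<Sum>\<alpha>\<in>alphas m. relrk n m a \<alpha> b (X \<alpha>)) \<le> (\<Sum>\<beta>\<in>P. f \<beta>)"
proof -
  define X where "X \<alpha> = (if \<alpha> \<in> comb ` P then Z (proj \<alpha>) else (\<lambda>_. 0))" for \<alpha>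
  have inj: "inj_on comb P" by (metis inj_onI inv)
  have s1: "(\<Sum>\<alpha>\<in>alphas m. g \<alpha>) = (\<Sum>\<beta>\<in>P. g (comb \<beta>))"
    if "\<And>\<alpha>. \<alpha> \<in> alphas m - comb ` P \<Longrightarrow> g \<alpha> = 0" for g :: "_ \<Rightarrow> 'b::comm_monoid_add"
  proof -
    have "(\<Sum>\<alpha>\<in>alphas m. g \<alpha>) = (\<Sum>\<alpha>\<in>comb ` P. g \<alpha>)"
      by (rule sum.mono_neutral_right[OF finite_alphas sub]) (use that in auto)
    also have "\<dots> = (\<Sum>\<beta>\<in>P. g (comb \<beta>))" by (rule sum.reindex[OF inj, unfolded comp_def])
    finally show ?thesis .
  qed
  have Xc: "X (comb \<beta>) = Z \<beta>" if "\<beta> \<in> P" for \<beta> using that inv by (auto simp: X_def)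
  have "(\<Sum>\<alpha>\<in>alphas m. X \<alpha> x) = (\<Sum>\<beta>\<in>P. Z \<beta> x)" for x
    by (subst s1) (auto simp: X_def Xc inv intro!: sum.cong)
  moreover have "(\<Sum>\<alpha>\<in>alphas m. relrk n m a \<alpha> b (X \<alpha>)) = (\<Sum>\<beta>\<in>P. relrk n m a (comb \<beta>) b (Z \<beta>))"
    by (subst s1) (auto simp: X_def Xc inv relrk_zero intro!: sum.cong)
  moreover have "(\<Sum>\<beta>\<in>P. relrk n m a (comb \<beta>) b (Z \<beta>)) \<le> (\<Sum>\<beta>\<in>P. f \<beta>)"
    by (rule sum_mono) (rule bound)
  ultimately show ?thesis using dec by (intro exI[of _ X]) auto
qed

lemma inf_compare:
  fixes S S' :: "real set" and n :: real
  assumes "S' \<noteq> {}" "\<And>t. t \<in> S \<Longrightarrow> t \<ge> 0" "\<And>s. s \<in> S' \<Longrightarrow> \<exists>t\<in>S. t \<le> s / n" "n \<ge> 1"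
  shows "Inf S \<le> Inf S' / n"
proof -
  have bdd: "bdd_below S" unfolding bdd_below_def using assms(2) by blast
  have "n * Inf S \<le> s" if s: "s \<in> S'" for s
  proof -
    obtain t where t: "t \<in> S" "t \<le> s / n" using assms(3)[OF s] by blast
    have "Inf S \<le> t" by (rule cInf_lower[OF t(1) bdd])
    then have "Inf S \<le> s / n" using t by simp
    then show ?thesis using assms(4) by (simp add: field_simps)
  qed
  then have "n * Inf S \<le> Inf S'" by (intro cInf_greatest[OF assms(1)])
  then show ?thesis using assms(4) by (simp add: field_simps)
qed



lemma card_img_le: "S \<subseteq> f ` {1..k-1} \<Longrightarrow> card S \<le> k - 1"
proof -
  assume "S \<subseteq> f ` {1..k-1}"
  then have "card S \<le> card (f ` {1..k-1})" by (intro card_mono) auto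
  also have "\<dots> \<le> card {1..k-1}" by (rule card_image_le) simp
  finally show ?thesis by simp
qed

lemma arith_final:
  fixes M MA n d e :: nat
  assumes "M \<le> n ^ (e-1) * MA" "n \<ge> 1" "e \<ge> 1"
  shows "real M / real n ^ (d+e) \<le> real MA / real n ^ d / real n"
proof -
  have M: "real M \<le> real n ^ (e-1) * real MA" using assms(1)
    by (metis of_nat_le_iff of_nat_mult of_nat_power)
  have np: "real n ^ (d+e) = real n ^ d * real n ^ (e-1) * real n"
  proof -
    have "d + e = d + (e-1) + 1" using assms(3) by simp
    then show ?thesis by (metis power_add power_one_right)
  qed
  have pos: "real n ^ d * real n ^ (e-1) * real n > 0" using assms(2) by simp
  have "real M / real n ^ (d+e) \<le> real n ^ (e-1) * real MA / (real n ^ d * real n ^ (e-1) * real n)"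
    unfolding np by (rule divide_right_mono[OF M]) (use pos in simp)
  also have "\<dots> = real MA / real n ^ d / real n" using assms(2) by (simp add: field_simps)
  finally show ?thesis .
qed

lemma relrkA:
  fixes X B :: "(nat \<Rightarrow> nat) \<Rightarrow> 'a::field"
  assumes n: "n\<ge>1" and d: "d\<ge>1" and e: "e\<ge>1" and a: "a\<le>1" and b: "b\<le>1" and al: "\<alpha> \<in> alphas d"
  shows "relrk n (d+e) a (combA d b \<alpha>) b (tprod d e X B) \<le> relrk n d a \<alpha> (1-b) X / real n"
proof -
  define I where "I = Iset (d+e) a (combA d b \<alpha>) b"
  define J where "J = Jset (d+e) a (combA d b \<alpha>) b"
  define SB where "SB = {i\<in>{1..2*e}. 2*d+i \<in> I}"
  define TB where "TB = {i\<in>{1..2*e}. 2*d+i \<in> J}"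
  have finSB: "finite SB" unfolding SB_def by simp
  have finTB: "finite TB" unfolding TB_def by simp
  have finIA: "finite (I \<inter> {1..2*d})" by simp
  have card: "card SB \<le> e-1 \<or> card TB \<le> e-1"
  proof (cases "b = 1")
    case True
    then have "SB \<subseteq> (\<lambda>j. 2*j) ` {1..e-1}" unfolding SB_def I_def using SA3[OF d e a al] by simp
    then show ?thesis using card_img_le by blast
  next
    case False
    then have "b = 0" using b by simp
    then have "TB \<subseteq> (\<lambda>j. 2*j+1) ` {1..e-1}" unfolding TB_def J_def using SA4[OF d e a al] by simp
    then show ?thesis using card_img_le by blast
  qed
  have main: "mrank (\<lambda>r c. tprod d e X B (merge I r c)) (asg n I) (asg n J)
     \<le> n^(e-1) * mrank (\<lambda>r c. X (merge (I \<inter> {1..2*d}) r c)) (asg n (I \<inter> {1..2*d})) (asg n (J \<inter> {1..2*d}))"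
  proof -
    have p2m: "\<And>r c. resB d e (merge I r c) = merge SB (resB d e r) (resB d e c)"
      unfolding SB_def by (rule resB_merge)
    have i1: "resA d ` asg n I \<subseteq> asg n (I \<inter> {1..2*d})" using resA_asg by blast
    have i2: "resA d ` asg n J \<subseteq> asg n (J \<inter> {1..2*d})" using resA_asg by blast
    have i3: "resB d e ` asg n I \<subseteq> asg n SB" unfolding SB_def using resB_asg by blast
    have i4: "resB d e ` asg n J \<subseteq> asg n TB" unfolding TB_def using resB_asg by blast
    show ?thesis unfolding tprod_res
      by (rule core[OF n finIA finSB finTB card resA_merge p2m i1 i2 i3 i4])
  qed
  have IA: "I \<inter> {1..2*d} = Iset d a \<alpha> (1-b)" unfolding I_def by (rule SA1[OF d e b])
  have JA: "J \<inter> {1..2*d} = Jset d a \<alpha> (1-b)" unfolding J_def by (rule SA2[OF d e b])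
  show ?thesis
    unfolding relrk_def I_def[symmetric] J_def[symmetric]
    by (rule arith_final[OF main[unfolded IA JA] n e])
qed

lemma relrkB:
  fixes X A :: "(nat \<Rightarrow> nat) \<Rightarrow> 'a::field"
  assumes n: "n\<ge>1" and d: "d\<ge>1" and e: "e\<ge>1" and a: "a\<le>1" and b: "b\<le>1" and al: "\<alpha> \<in> alphas e"
  shows "relrk n (d+e) a (combB d a \<alpha>) b (tprod d e A X) \<le> relrk n e (1-a) \<alpha> b X / real n"
proof -
  define I where "I = Iset (d+e) a (combB d a \<alpha>) b"
  define J where "J = Jset (d+e) a (combB d a \<alpha>) b"
  define SB where "SB = {i\<in>{1..2*e}. 2*d+i \<in> I}"
  define TB where "TB = {i\<in>{1..2*e}. 2*d+i \<in> J}"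
  have finSB: "finite SB" unfolding SB_def by simp
  have finIA: "finite (I \<inter> {1..2*d})" by simp
  have finJA: "finite (J \<inter> {1..2*d})" by simp
  have card: "card (I \<inter> {1..2*d}) \<le> d-1 \<or> card (J \<inter> {1..2*d}) \<le> d-1"
  proof (cases "a = 0")
    case True
    then have "I \<inter> {1..2*d} \<subseteq> (\<lambda>j. 2*j) ` {1..d-1}" unfolding I_def using SB3[OF d e b] by simp
    then show ?thesis using card_img_le by blast
  next
    case False
    then have "a = 1" using a by simp
    then have "J \<inter> {1..2*d} \<subseteq> (\<lambda>j. 2*j+1) ` {1..d-1}" unfolding J_def using SB4[OF d e b al] by simp
    then show ?thesis using card_img_le by blast
  qed
  have tp: "tprod d e A X z = X (resB d e z) * A (resA d z)" for z
    by (simp add: tprod_res mult.commute)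
  have main: "mrank (\<lambda>r c. tprod d e A X (merge I r c)) (asg n I) (asg n J)
     \<le> n^(d-1) * mrank (\<lambda>r c. X (merge SB r c)) (asg n SB) (asg n TB)"
  proof -
    have p1m: "\<And>r c. resB d e (merge I r c) = merge SB (resB d e r) (resB d e c)"
      unfolding SB_def by (rule resB_merge)
    have i1: "resA d ` asg n I \<subseteq> asg n (I \<inter> {1..2*d})" using resA_asg by blast
    have i2: "resA d ` asg n J \<subseteq> asg n (J \<inter> {1..2*d})" using resA_asg by blast
    have i3: "resB d e ` asg n I \<subseteq> asg n SB" unfolding SB_def using resB_asg by blast
    have i4: "resB d e ` asg n J \<subseteq> asg n TB" unfolding TB_def using resB_asg by blast
    show ?thesis unfolding tp
      by (rule core[OF n finSB finIA finJA card p1m resA_merge i3 i4 i1 i2])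
  qed
  have IB: "SB = Iset e (1-a) \<alpha> b" unfolding SB_def I_def by (rule SB1[OF d e a b al])
  have JB: "TB = Jset e (1-a) \<alpha> b" unfolding TB_def J_def by (rule SB2[OF d e a b al])
  have "real n ^ (d + e) = real n ^ (e + d)" by (simp add: add.commute)
  then show ?thesis
    unfolding relrk_def I_def[symmetric] J_def[symmetric]
    using arith_final[OF main[unfolded IB JB] n d, of e] by simp
qed



definition Sset :: "nat \<Rightarrow> nat \<Rightarrow> ((nat \<Rightarrow> nat) \<Rightarrow> 'a::field) \<Rightarrow> nat \<Rightarrow> nat \<Rightarrow> real set" where
  "Sset n m C a b = {\<Sum>\<alpha>\<in>alphas m. relrk n m a \<alpha> b (X \<alpha>) | X.
             \<forall>x\<in>asg n {1..2*m}. C x = (\<Sum>\<alpha>\<in>alphas m. X \<alpha> x)}"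

lemma rho_Sset: "rho n m C = (MAX a\<in>{0,1::nat}. MAX b\<in>{0,1::nat}. Inf (Sset n m C a b))"
  unfolding rho_def Sset_def by simp

lemma Sset_nonempty: "Sset n m C a b \<noteq> {}"
proof -
  define z :: "nat \<Rightarrow> nat" where "z = (\<lambda>_. 0)"
  have z: "z \<in> alphas m" unfolding z_def alphas_def by auto
  define X where "X \<alpha> = (\<lambda>x. if \<alpha> = z then C x else 0)" for \<alpha>
  have "\<forall>x\<in>asg n {1..2*m}. C x = (\<Sum>\<alpha>\<in>alphas m. X \<alpha> x)"
    unfolding X_def using z finite_alphas by (simp add: sum.delta')
  then show ?thesis unfolding Sset_def by blast
qed

lemma Sset_nonneg: "t \<in> Sset n m C a b \<Longrightarrow> t \<ge> 0"
  unfolding Sset_def by (auto intro!: sum_nonneg relrk_nonneg)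

lemma Inf_le_rho:
  assumes "a \<in> {0,1}" "b \<in> {0,1}"
  shows "Inf (Sset n m C a b) \<le> rho n m C"
proof -
  have "Inf (Sset n m C a b) \<le> (MAX b\<in>{0,1::nat}. Inf (Sset n m C a b))"
    using assms(2) by (intro Max_ge) auto
  also have "\<dots> \<le> (MAX a\<in>{0,1::nat}. MAX b\<in>{0,1::nat}. Inf (Sset n m C a b))"
    using assms(1) by (intro Max_ge) auto
  finally show ?thesis unfolding rho_Sset .
qed

definition projA :: "nat \<Rightarrow> (nat \<Rightarrow> nat) \<Rightarrow> (nat \<Rightarrow> nat)" where
  "projA d \<alpha> = (\<lambda>k. if k < d then \<alpha> k else 0)"
definition projB :: "nat \<Rightarrow> (nat \<Rightarrow> nat) \<Rightarrow> (nat \<Rightarrow> nat)" where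
  "projB d \<alpha> = (\<lambda>k. if k \<ge> 1 then \<alpha> (d+k) else 0)"

lemma projA_combA: "\<beta> \<in> alphas d \<Longrightarrow> projA d (combA d b \<beta>) = \<beta>"
proof -
  assume a: "\<beta> \<in> alphas d"
  have "\<beta> k = 0" if "\<not> k < d" for k
  proof -
    have "k \<notin> {1..d-1}" using that by auto
    then show ?thesis using a unfolding alphas_def by blast
  qed
  then show ?thesis unfolding projA_def combA_def by (auto simp: fun_eq_iff)
qed

lemma projB_combB: "\<beta> \<in> alphas e \<Longrightarrow> projB d (combB d a \<beta>) = \<beta>"
  unfolding projB_def combB_def alphas_def by (auto simp: fun_eq_iff)

lemma stepA:
  fixes A B :: "(nat \<Rightarrow> nat) \<Rightarrow> 'a::field"
  assumes n: "n\<ge>1" and d: "d\<ge>1" and e: "e\<ge>1" and a: "a\<le>1" and b: "b\<le>1"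
  shows "Inf (Sset n (d+e) (tprod d e A B) a b) \<le> Inf (Sset n d A a (1-b)) / real n"
proof (rule inf_compare[OF Sset_nonempty Sset_nonneg])
  show "real n \<ge> 1" using n by simp
  fix s assume "s \<in> Sset n d A a (1-b)"
  then obtain XA where s: "s = (\<Sum>\<alpha>\<in>alphas d. relrk n d a \<alpha> (1-b) (XA \<alpha>))"
    and decA: "\<forall>x\<in>asg n {1..2*d}. A x = (\<Sum>\<alpha>\<in>alphas d. XA \<alpha> x)"
    unfolding Sset_def by blast
  have dec: "tprod d e A B x = (\<Sum>\<beta>\<in>alphas d. tprod d e (XA \<beta>) B x)" if x: "x \<in> asg n {1..2*(d+e)}" for x
  proof -
    have "resA d x \<in> asg n ({1..2*(d+e)} \<inter> {1..2*d})" by (rule resA_asg[OF x])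
    moreover have "{1..2*(d+e)} \<inter> {1..2*d} = {1..2*d}" by auto
    ultimately have "resA d x \<in> asg n {1..2*d}" by simp
    then show ?thesis unfolding tprod_res using decA by (simp add: sum_distrib_right)
  qed
  obtain X where X: "\<forall>x\<in>asg n {1..2*(d+e)}. tprod d e A B x = (\<Sum>\<alpha>\<in>alphas (d+e). X \<alpha> x)"
    and Xs: "(\<Sum>\<alpha>\<in>alphas (d+e). relrk n (d+e) a \<alpha> b (X \<alpha>)) \<le> (\<Sum>\<beta>\<in>alphas d. relrk n d a \<beta> (1-b) (XA \<beta>) / real n)"
    using build[where proj="projA d" and comb="combA d b" and P="alphas d" and Z="\<lambda>\<beta>. tprod d e (XA \<beta>) B"
        and f="\<lambda>\<beta>. relrk n d a \<beta> (1-b) (XA \<beta>) / real n" and m="d+e" and n=n and a=a and b=b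
        and C="tprod d e A B", OF projA_combA _ finite_alphas relrkA[OF n d e a b] dec]
      combA_alphas[OF _ d e b] by blast
  have "(\<Sum>\<alpha>\<in>alphas (d+e). relrk n (d+e) a \<alpha> b (X \<alpha>)) \<in> Sset n (d+e) (tprod d e A B) a b"
    unfolding Sset_def using X by blast
  moreover have "(\<Sum>\<alpha>\<in>alphas (d+e). relrk n (d+e) a \<alpha> b (X \<alpha>)) \<le> s / real n"
    using Xs unfolding s by (simp add: sum_divide_distrib)
  ultimately show "\<exists>t\<in>Sset n (d+e) (tprod d e A B) a b. t \<le> s / real n" by blast
qed

lemma stepB:
  fixes A B :: "(nat \<Rightarrow> nat) \<Rightarrow> 'a::field"
  assumes n: "n\<ge>1" and d: "d\<ge>1" and e: "e\<ge>1" and a: "a\<le>1" and b: "b\<le>1"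
  shows "Inf (Sset n (d+e) (tprod d e A B) a b) \<le> Inf (Sset n e B (1-a) b) / real n"
proof (rule inf_compare[OF Sset_nonempty Sset_nonneg])
  show "real n \<ge> 1" using n by simp
  fix s assume "s \<in> Sset n e B (1-a) b"
  then obtain XB where s: "s = (\<Sum>\<alpha>\<in>alphas e. relrk n e (1-a) \<alpha> b (XB \<alpha>))"
    and decB: "\<forall>x\<in>asg n {1..2*e}. B x = (\<Sum>\<alpha>\<in>alphas e. XB \<alpha> x)"
    unfolding Sset_def by blast
  have dec: "tprod d e A B x = (\<Sum>\<beta>\<in>alphas e. tprod d e A (XB \<beta>) x)" if x: "x \<in> asg n {1..2*(d+e)}" for x
  proof -
    have "resB d e x \<in> asg n {i\<in>{1..2*e}. 2*d+i \<in> {1..2*(d+e)}}" by (rule resB_asg[OF x])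
    moreover have "{i\<in>{1..2*e}. 2*d+i \<in> {1..2*(d+e)}} = {1..2*e}" by auto
    ultimately have "resB d e x \<in> asg n {1..2*e}" by simp
    then show ?thesis unfolding tprod_res using decB by (simp add: sum_distrib_left)
  qed
  obtain X where X: "\<forall>x\<in>asg n {1..2*(d+e)}. tprod d e A B x = (\<Sum>\<alpha>\<in>alphas (d+e). X \<alpha> x)"
    and Xs: "(\<Sum>\<alpha>\<in>alphas (d+e). relrk n (d+e) a \<alpha> b (X \<alpha>)) \<le> (\<Sum>\<beta>\<in>alphas e. relrk n e (1-a) \<beta> b (XB \<beta>) / real n)"
    using build[where proj="projB d" and comb="combB d a" and P="alphas e" and Z="\<lambda>\<beta>. tprod d e A (XB \<beta>)"
        and f="\<lambda>\<beta>. relrk n e (1-a) \<beta> b (XB \<beta>) / real n" and m="d+e" and n=n and a=a and b=b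
        and C="tprod d e A B", OF projB_combB[where e=e] _ finite_alphas relrkB[OF n d e a b] dec]
      combB_alphas[OF _ d e a] by blast
  have "(\<Sum>\<alpha>\<in>alphas (d+e). relrk n (d+e) a \<alpha> b (X \<alpha>)) \<in> Sset n (d+e) (tprod d e A B) a b"
    unfolding Sset_def using X by blast
  moreover have "(\<Sum>\<alpha>\<in>alphas (d+e). relrk n (d+e) a \<alpha> b (X \<alpha>)) \<le> s / real n"
    using Xs unfolding s by (simp add: sum_divide_distrib)
  ultimately show "\<exists>t\<in>Sset n (d+e) (tprod d e A B) a b. t \<le> s / real n" by blast
qed

theorem lemma4p9:
  fixes A B :: "(nat \<Rightarrow> nat) \<Rightarrow> 'a::field" and n d e :: nat
  assumes "n \<ge> 1" and "d \<ge> 1" and "e \<ge> 1"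
  shows "rho n (d + e) (tprod d e A B) \<le> (1 / real n) * min (rho n d A) (rho n e B)"
proof -
  have each: "Inf (Sset n (d+e) (tprod d e A B) a b) \<le> (1 / real n) * min (rho n d A) (rho n e B)"
    if ab: "a \<in> {0,1}" "b \<in> {0,1}" for a b
  proof -
    have a1: "a \<le> 1" and b1: "b \<le> 1" using ab by auto
    have "Inf (Sset n (d+e) (tprod d e A B) a b) \<le> Inf (Sset n d A a (1-b)) / real n"
      by (rule stepA[OF assms a1 b1])
    also have "\<dots> \<le> rho n d A / real n"
      by (rule divide_right_mono[OF Inf_le_rho]) (use ab in auto)
    finally have 1: "Inf (Sset n (d+e) (tprod d e A B) a b) \<le> rho n d A / real n" .
    have "Inf (Sset n (d+e) (tprod d e A B) a b) \<le> Inf (Sset n e B (1-a) b) / real n"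
      by (rule stepB[OF assms a1 b1])
    also have "\<dots> \<le> rho n e B / real n"
      by (rule divide_right_mono[OF Inf_le_rho]) (use ab in auto)
    finally have 2: "Inf (Sset n (d+e) (tprod d e A B) a b) \<le> rho n e B / real n" .
    show ?thesis using 1 2 by (simp add: min_def)
  qed
  show ?thesis unfolding rho_Sset[of n "d+e"]
    using each by (simp add: Max_le_iff)
qed

end
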